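(* Let $a,b,c>0$ and consider the cubic polynomial $p_3(\lambda)=\lambda^3-b\lambda^2-(a+c)\lambda+cb$. Then $p_3$ has three distinct real roots $\lambda_0,\lambda_1,\lambda_2$ with the following properties: (1) they are given by $$\lambda_k=2\sqrt{\frac{3(a+c)+b^2}{9}}\cos\Big(\frac{\theta}{3}+\frac{2k\pi}{3}\Big)+\frac b3,\quad k=0,1,2,\qquad \cos\theta=\frac b2\,\frac{2b^2+9(a+c)-27c}{(3(a+c)+b^2)^{3/2}},\ \theta\in[0,\pi];$$ (2) $\lambda_0\in(\max(b,\sqrt c),+\infty)$, $\lambda_1\in(-\infty,-\sqrt c)$, $\lambda_2\in(0,\min(b,\sqrt c))$; (3) $b=\lambda_0+\lambda_1+\lambda_2$, $a+c=-(\lambda_1\lambda_2+\lambda_0\lambda_1+\lambda_0\lambda_2)$, $cb=-\lambda_0\lambda_1\lambda_2$; (4) $c-\lambda_0^2<0$, $c-\lambda_1^2<0$, $c-\lambda_2^2>0$, and $\lambda_2<|\lambda_1|<\lambda_0$. *)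

theory Defs
  imports Complex_Main "HOL-Computational_Algebra.Polynomial"
begin

definition p3 :: "real \<Rightarrow> real \<Rightarrow> real \<Rightarrow> real poly" where
  "p3 a b c = [: c * b, -(a + c), -b, 1 :]"

end

theory Submission
  imports Defs
begin

lemma vieta3:
  fixes l0 l1 l2 b s d :: real
  assumes d01: "l0 \<noteq> l1" and d02: "l0 \<noteq> l2" and d12: "l1 \<noteq> l2"
    and r0: "l0^3 - b*l0^2 - s*l0 + d = 0"
    and r1: "l1^3 - b*l1^2 - s*l1 + d = 0"
    and r2: "l2^3 - b*l2^2 - s*l2 + d = 0"
  shows "b = l0 + l1 + l2 \<and> s = - (l1 * l2 + l0 * l1 + l0 * l2) \<and> d = - (l0 * l1 * l2)"
proof -
  have e01: "(l0 - l1) * (l0^2 + l0*l1 + l1^2 - b*(l0+l1) - s) = 0"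
    using r0 r1 by (simp add: algebra_simps power2_eq_square power3_eq_cube)
  have h01: "l0^2 + l0*l1 + l1^2 - b*(l0+l1) - s = 0" using e01 d01 by simp
  have e02: "(l0 - l2) * (l0^2 + l0*l2 + l2^2 - b*(l0+l2) - s) = 0"
    using r0 r2 by (simp add: algebra_simps power2_eq_square power3_eq_cube)
  have h02: "l0^2 + l0*l2 + l2^2 - b*(l0+l2) - s = 0" using e02 d02 by simp
  have e12: "(l1 - l2) * (l0 + l1 + l2 - b) = 0"
    using h01 h02 by (simp add: algebra_simps power2_eq_square)
  have sb: "b = l0 + l1 + l2" using e12 d12 by simp
  have ss: "s = - (l1 * l2 + l0 * l1 + l0 * l2)"
    using h01 unfolding sb by (simp add: algebra_simps power2_eq_square)
  have "d = - (l0 * l1 * l2)"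
    using r0 unfolding sb ss by (simp add: algebra_simps power2_eq_square power3_eq_cube)
  then show ?thesis using sb ss by blast
qed

lemma neg_prod3:
  fixes x l0 l1 l2 :: real
  assumes "l1 < l2" "l2 < l0" "(x - l0) * (x - l1) * (x - l2) < 0"
  shows "x < l1 \<or> (l2 < x \<and> x < l0)"
proof (rule ccontr)
  assume "\<not> ?thesis"
  hence "(l1 \<le> x \<and> x \<le> l2) \<or> l0 \<le> x" by auto
  thus False
  proof
    assume h: "l1 \<le> x \<and> x \<le> l2"
    have "0 \<le> (l0 - x) * (x - l1)" using h assms by (intro mult_nonneg_nonneg) auto
    hence "0 \<le> ((l0 - x) * (x - l1)) * (l2 - x)" using h assms by (intro mult_nonneg_nonneg) auto
    thus False using assms(3) by (simp add: algebra_simps)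
  next
    assume h: "l0 \<le> x"
    have "0 \<le> (x - l0) * (x - l1)" using h assms by (intro mult_nonneg_nonneg) auto
    hence "0 \<le> ((x - l0) * (x - l1)) * (x - l2)" using h assms by (intro mult_nonneg_nonneg) auto
    thus False using assms(3) by (simp add: algebra_simps)
  qed
qed

lemma pos_prod3:
  fixes x l0 l1 l2 :: real
  assumes "l1 < l2" "l2 < l0" "(x - l0) * (x - l1) * (x - l2) > 0"
  shows "(l1 < x \<and> x < l2) \<or> l0 < x"
proof (rule ccontr)
  assume "\<not> ?thesis"
  hence "x \<le> l1 \<or> (l2 \<le> x \<and> x \<le> l0)" by auto
  thus False
  proof
    assume h: "x \<le> l1"
    have "0 \<le> (l0 - x) * (l1 - x)" using h assms by (intro mult_nonneg_nonneg) auto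
    hence "0 \<le> ((l0 - x) * (l1 - x)) * (l2 - x)" using h assms by (intro mult_nonneg_nonneg) auto
    thus False using assms(3) by (simp add: algebra_simps)
  next
    assume h: "l2 \<le> x \<and> x \<le> l0"
    have "0 \<le> (l0 - x) * (x - l1)" using h assms by (intro mult_nonneg_nonneg) auto
    hence "0 \<le> ((l0 - x) * (x - l1)) * (x - l2)" using h assms by (intro mult_nonneg_nonneg) auto
    thus False using assms(3) by (simp add: algebra_simps)
  qed
qed

lemma poly_p3: "poly (p3 a b c) x = x^3 - b*x^2 - (a+c)*x + c*b"
  by (simp add: p3_def algebra_simps power2_eq_square power3_eq_cube)

theorem proposition1:
  fixes a b c :: real
  assumes "a > 0" and "b > 0" and "c > 0"
  shows "\<exists>l0 l1 l2 :: real.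
     distinct [l0, l1, l2] \<and>
     {x. poly (p3 a b c) x = 0} = {l0, l1, l2} \<and>
     (\<exists>\<theta>. 0 \<le> \<theta> \<and> \<theta> \<le> pi \<and>
        cos \<theta> = (b / 2) * (2 * b^2 + 9 * (a + c) - 27 * c) / ((3 * (a + c) + b^2) powr (3/2)) \<and>
        (\<forall>k::nat. k \<le> 2 \<longrightarrow>
           [l0, l1, l2] ! k =
             2 * sqrt ((3 * (a + c) + b^2) / 9) * cos (\<theta> / 3 + 2 * real k * pi / 3) + b / 3)) \<and>
     max b (sqrt c) < l0 \<and>
     l1 < - sqrt c \<and>
     0 < l2 \<and> l2 < min b (sqrt c) \<and>
     b = l0 + l1 + l2 \<and>
     a + c = - (l1 * l2 + l0 * l1 + l0 * l2) \<and>
     c * b = - (l0 * l1 * l2) \<and>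
     c - l0^2 < 0 \<and> c - l1^2 < 0 \<and> c - l2^2 > 0 \<and>
     l2 < \<bar>l1\<bar> \<and> \<bar>l1\<bar> < l0"
proof -
  define s where "s = a + c"
  define P where "P = 3 * s + b^2"
  define K where "K = 2 * b^2 + 9 * s - 27 * c"
  define C where "C = (b / 2) * (2 * b^2 + 9 * (a + c) - 27 * c) / ((3 * (a + c) + b^2) powr (3/2))"
  define R where "R = sqrt ((3 * (a + c) + b^2) / 9)"
  define f where "f = (\<lambda>x::real. x^3 - b*x^2 - s*x + c*b)"
  have Ppos: "P > 0" unfolding P_def s_def using assms by (simp add: add_pos_nonneg)
  define q where "q = sqrt P"
  have qpos: "q > 0" using Ppos q_def by simp
  have qq: "q * q = P" using Ppos q_def by simp
  have Rq: "R = q / 3" unfolding R_def q_def P_def s_def by (simp add: real_sqrt_divide)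
  have pw: "P powr (3/2) = P * q"
  proof -
    have "P powr (3/2) = P powr (1 + 1/2)" by simp
    also have "\<dots> = P * P powr (1/2)" using Ppos by (simp only: powr_add powr_one_gt_zero_iff) simp
    also have "\<dots> = P * q" using Ppos by (simp add: q_def powr_half_sqrt)
    finally show ?thesis .
  qed
  have CK: "C * (2 * P * q) = b * K"
  proof -
    have "C = (b / 2) * K / (P * q)" unfolding C_def K_def s_def using pw by (simp add: P_def s_def)
    thus ?thesis using Ppos qpos by (simp add: field_simps)
  qed
  define D where "D = b^2*s^2 + 4*s^3 + 4*b^4*c - 27*b^2*c^2 + 18*b^2*s*c"
  have Did: "4 * P^3 - (b*K)^2 = 27 * D"
    unfolding P_def K_def D_def by algebra
  have Dpos: "D > 0"
  proof -
    have "D = 4*c*(c-b^2)^2 + (b^2*(2*a*c + a^2) + 4*(3*c^2*a + 3*c*a^2 + a^3) + 18*b^2*a*c)"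
      unfolding D_def s_def by algebra
    moreover have "b^2*(2*a*c + a^2) + 4*(3*c^2*a + 3*c*a^2 + a^3) + 18*b^2*a*c > 0"
      using assms by (simp add: add_pos_pos)
    moreover have "4*c*(c-b^2)^2 \<ge> 0" using assms by simp
    ultimately show ?thesis by linarith
  qed
  have C2: "C^2 < 1"
  proof -
    have "(C * (2 * P * q))^2 < (2 * P * q)^2"
    proof -
      have "(2 * P * q)^2 = 4 * P^3" using qq by (simp add: power2_eq_square power3_eq_cube algebra_simps)
      thus ?thesis using CK Did Dpos by simp
    qed
    hence "C^2 * (2*P*q)^2 < 1 * (2*P*q)^2" by (simp add: power_mult_distrib)
    thus ?thesis using Ppos qpos by (simp del: mult_less_cancel_right mult_less_cancel_left)
  qed
  have Cb: "-1 < C" "C < 1"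
  proof -
    have "\<bar>C\<bar> < 1" using C2 by (simp add: abs_square_less_1)
    thus "-1 < C" "C < 1" by auto
  qed
  define \<theta> where "\<theta> = arccos C"
  have th: "0 < \<theta>" "\<theta> < pi" using arccos_lt_bounded[OF Cb] \<theta>_def by auto
  have cth: "cos \<theta> = C" using Cb \<theta>_def by simp
  define L where "L = (\<lambda>k::nat. 2 * R * cos (\<theta> / 3 + 2 * real k * pi / 3) + b / 3)"
  have root: "f (2 * R * u + b / 3) = 0" if "4 * u^3 - 3 * u = C" for u
  proof -
    have "f (2 * R * u + b / 3) = (8 * R^3 * u^3 - (P/3) * (2*R*u)) - b * K / 27"
      unfolding f_def P_def K_def by (simp add: field_simps power2_eq_square power3_eq_cube)
    also have "8 * R^3 * u^3 - (P/3) * (2*R*u) = 2 * R * (P/9) * (4*u^3 - 3*u)"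
    proof -
      have q3: "q = 3 * R" using Rq by simp
      have "R * R * 9 = P" unfolding qq[symmetric] q3 by simp
      thus ?thesis by (simp add: algebra_simps power2_eq_square power3_eq_cube)
    qed
    also have "\<dots> = 2 * R * (P/9) * C" using that by simp
    also have "\<dots> = (C * (2 * P * q)) / 27" using Rq by simp
    also have "\<dots> = b * K / 27" using CK by simp
    finally show ?thesis by simp
  qed
  have u3: "4 * (cos x)^3 - 3 * cos x = C" if "cos (3 * x) = C" for x
    using that cos_treble_cos[of x] by simp
  have f0: "f (L 0) = 0"
    unfolding L_def by (rule root, rule u3) (simp add: cth)
  have f1: "f (L 1) = 0"
  proof -
    have "cos (3 * (\<theta> / 3 + 2 * real 1 * pi / 3)) = cos (\<theta> + 2 * pi)" by simp
    thus ?thesis unfolding L_def using cth by (intro root u3) simp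
  qed
  have f2: "f (L 2) = 0"
  proof -
    have "3 * (\<theta> / 3 + 2 * real 2 * pi / 3) = (\<theta> + 2 * pi) + 2 * pi" by simp
    hence "cos (3 * (\<theta> / 3 + 2 * real 2 * pi / 3)) = cos \<theta>" by (simp only: cos_periodic)
    thus ?thesis unfolding L_def using cth by (intro root u3) simp
  qed
  have Rpos: "R > 0" using Rq qpos by simp
  have c0: "cos (\<theta> / 3 + 2 * real 0 * pi / 3) > 1/2"
  proof -
    have "cos (pi/3) < cos (\<theta>/3)" using th by (intro cos_monotone_0_pi) auto
    thus ?thesis by (simp add: cos_60)
  qed
  have c1: "cos (\<theta> / 3 + 2 * real 1 * pi / 3) < -1/2"
  proof -
    have "cos (\<theta>/3 + 2*pi/3) < cos (2*pi/3)" using th by (intro cos_monotone_0_pi) auto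
    thus ?thesis by (simp add: cos_120)
  qed
  have c2: "-1/2 < cos (\<theta> / 3 + 2 * real 2 * pi / 3) \<and> cos (\<theta> / 3 + 2 * real 2 * pi / 3) < 1/2"
  proof -
    have e: "cos (\<theta> / 3 + 2 * real 2 * pi / 3) = cos (2*pi/3 - \<theta>/3)"
    proof -
      have "cos (\<theta> / 3 + 2 * real 2 * pi / 3) = cos (2*pi - (2*pi/3 - \<theta>/3))"
        by (simp add: algebra_simps)
      thus ?thesis by (simp only: cos_2pi_minus)
    qed
    have "cos (2*pi/3) < cos (2*pi/3 - \<theta>/3)" using th by (intro cos_monotone_0_pi) auto
    moreover have "cos (2*pi/3 - \<theta>/3) < cos (pi/3)" using th by (intro cos_monotone_0_pi) auto
    ultimately show ?thesis unfolding e by (simp add: cos_60 cos_120)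
  qed
  have o1: "L 1 < L 2" and o2: "L 2 < L 0"
  proof -
    have "2*R*cos (\<theta> / 3 + 2 * real 1 * pi / 3) < 2*R*(-1/2)" using c1 Rpos by (intro mult_strict_left_mono) auto
    moreover have "2*R*(-1/2) < 2*R*cos (\<theta> / 3 + 2 * real 2 * pi / 3)" using c2 Rpos by (intro mult_strict_left_mono) auto
    moreover have "2*R*cos (\<theta> / 3 + 2 * real 2 * pi / 3) < 2*R*(1/2)" using c2 Rpos by (intro mult_strict_left_mono) auto
    moreover have "2*R*(1/2) < 2*R*cos (\<theta> / 3 + 2 * real 0 * pi / 3)" using c0 Rpos by (intro mult_strict_left_mono) auto
    ultimately show "L 1 < L 2" "L 2 < L 0" unfolding L_def by linarith+
  qed
  define l0 where "l0 = L 0"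
  define l1 where "l1 = L 1"
  define l2 where "l2 = L 2"
  have o1': "l1 < l2" and o2': "l2 < l0" using o1 o2 l0_def l1_def l2_def by auto
  have V: "b = l0 + l1 + l2 \<and> s = - (l1 * l2 + l0 * l1 + l0 * l2) \<and> c * b = - (l0 * l1 * l2)"
    using o1' o2' f0 f1 f2 unfolding l0_def l1_def l2_def f_def
    by (intro vieta3) auto
  have fact: "f x = (x - l0) * (x - l1) * (x - l2)" for x
  proof -
    have "b = l0 + l1 + l2" "s = - (l1 * l2 + l0 * l1 + l0 * l2)" "c * b = - (l0 * l1 * l2)" using V by auto
    thus ?thesis unfolding f_def by algebra
  qed
  have pf: "poly (p3 a b c) x = f x" for x unfolding poly_p3 f_def s_def by simp
  have rootset: "{x. poly (p3 a b c) x = 0} = {l0, l1, l2}"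
    unfolding pf fact by auto
  have sc: "sqrt c > 0" using assms by simp
  have scc: "sqrt c * sqrt c = c" using assms by simp
  have fsc: "f (sqrt c) = - a * sqrt c"
    unfolding f_def s_def using scc by (simp add: algebra_simps power2_eq_square power3_eq_cube)
  have fmsc: "f (- sqrt c) = a * sqrt c"
    unfolding f_def s_def using scc by (simp add: algebra_simps power2_eq_square power3_eq_cube)
  have fz: "f 0 = c * b" unfolding f_def by simp
  have fb: "f b = - a * b" unfolding f_def s_def by (simp add: algebra_simps power2_eq_square power3_eq_cube)
  have cbp: "c * b > 0" using assms by simp
  have asp: "a * sqrt c > 0" using assms sc by simp
  have abp: "a * b > 0" using assms by simp
  have A1: "sqrt c < l1 \<or> (l2 < sqrt c \<and> sqrt c < l0)"
    by (rule neg_prod3[OF o1' o2']) (metis fact fsc asp neg_less_0_iff_less mult_minus_left)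
  have A2: "(l1 < - sqrt c \<and> - sqrt c < l2) \<or> l0 < - sqrt c"
    by (rule pos_prod3[OF o1' o2']) (metis fact fmsc asp)
  have A3: "(l1 < 0 \<and> 0 < l2) \<or> l0 < 0"
    by (rule pos_prod3[OF o1' o2']) (metis fact fz cbp)
  have A4: "b < l1 \<or> (l2 < b \<and> b < l0)"
    by (rule neg_prod3[OF o1' o2']) (metis fact fb abp neg_less_0_iff_less mult_minus_left)
  have B3: "l1 < 0 \<and> 0 < l2"
    using A3 V o1' o2' assms by linarith
  have B1: "l2 < sqrt c \<and> sqrt c < l0" using A1 B3 sc by linarith
  have B2: "l1 < - sqrt c \<and> - sqrt c < l2" using A2 B3 sc o2' by linarith
  have B4: "l2 < b \<and> b < l0" using A4 B3 assms by linarith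
  have sq0: "c - l0^2 < 0"
  proof -
    have "sqrt c * sqrt c < l0 * l0" using B1 sc by (intro mult_strict_mono; linarith)
    thus ?thesis using scc by (simp add: power2_eq_square)
  qed
  have sq1: "c - l1^2 < 0"
  proof -
    have "sqrt c * sqrt c < (-l1) * (-l1)" using B2 sc by (intro mult_strict_mono; linarith)
    thus ?thesis using scc by (simp add: power2_eq_square)
  qed
  have sq2: "c - l2^2 > 0"
  proof -
    have "l2 * l2 < sqrt c * sqrt c" using B1 B3 sc by (intro mult_strict_mono; linarith)
    thus ?thesis using scc by (simp add: power2_eq_square)
  qed
  have ab: "l2 < \<bar>l1\<bar> \<and> \<bar>l1\<bar> < l0" using V B3 B4 by auto
  have trig: "\<forall>k::nat. k \<le> 2 \<longrightarrow>
           [l0, l1, l2] ! k =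
             2 * sqrt ((3 * (a + c) + b^2) / 9) * cos (\<theta> / 3 + 2 * real k * pi / 3) + b / 3"
  proof (intro allI impI)
    fix k :: nat assume "k \<le> 2"
    hence "k = 0 \<or> k = 1 \<or> k = 2" by auto
    thus "[l0, l1, l2] ! k =
             2 * sqrt ((3 * (a + c) + b^2) / 9) * cos (\<theta> / 3 + 2 * real k * pi / 3) + b / 3"
      unfolding l0_def l1_def l2_def L_def R_def by auto
  qed
  have T: "\<exists>\<theta>. 0 \<le> \<theta> \<and> \<theta> \<le> pi \<and>
        cos \<theta> = (b / 2) * (2 * b^2 + 9 * (a + c) - 27 * c) / ((3 * (a + c) + b^2) powr (3/2)) \<and>
        (\<forall>k::nat. k \<le> 2 \<longrightarrow>
           [l0, l1, l2] ! k =
             2 * sqrt ((3 * (a + c) + b^2) / 9) * cos (\<theta> / 3 + 2 * real k * pi / 3) + b / 3)"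
  proof (rule exI[of _ \<theta>], intro conjI)
    show "0 \<le> \<theta>" "\<theta> \<le> pi" using th by auto
    show "cos \<theta> = (b / 2) * (2 * b^2 + 9 * (a + c) - 27 * c) / ((3 * (a + c) + b^2) powr (3/2))"
      using cth unfolding C_def .
  qed (rule trig)
  have dist: "distinct [l0, l1, l2]" using o1' o2' by auto
  have mx: "max b (sqrt c) < l0" using B1 B4 by simp
  have mn: "l2 < min b (sqrt c)" using B1 B4 by simp
  have V1: "b = l0 + l1 + l2" and V2: "a + c = - (l1 * l2 + l0 * l1 + l0 * l2)"
    and V3: "c * b = - (l0 * l1 * l2)" using V unfolding s_def by auto
  have ab1: "l2 < \<bar>l1\<bar>" and ab2: "\<bar>l1\<bar> < l0" using ab by auto
  have B2': "l1 < - sqrt c" and B3': "0 < l2" using B2 B3 by auto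
  show ?thesis
    apply (rule exI[of _ l0], rule exI[of _ l1], rule exI[of _ l2])
    apply (intro conjI)
    by (fact dist rootset T mx mn B2' B3' V1 V2 V3 sq0 sq1 sq2 ab1 ab2)+
qed

end
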